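(* If $f(x_1,\ldots,x_n)$ is a Chow function, then every restriction of $f$ (obtained by fixing some of its variables to constants) is a Chow function.
   Context: The Chow parameters of a Boolean function $f(x_1,\ldots,x_n)$ are $(w_1(f),\ldots,w_n(f),w(f))$, where $w(f)$ is the number of true points and $w_i(f)$ the number of true points with $x_i=1$. $f$ is a Chow function if no other Boolean function of the same variables has the same Chow parameters. A restriction of $f$ is a function $f_{|x_{i_1}=\alpha_1,\ldots,x_{i_k}=\alpha_k}$ of the remaining variables obtained by fixing $x_{i_j}=\alpha_j\in\{0,1\}$. *)

theory Defs
  imports Main
begin

text \<open>A Boolean function of the variables in a finite set V is modelled as a predicate
  f on assignments; only its values on the points of V (assignments that are False
  outside V) matter.\<close>

definition points :: "'v set \<Rightarrow> ('v \<Rightarrow> bool) set" where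
  "points V = {x. \<forall>v. v \<notin> V \<longrightarrow> \<not> x v}"

definition true_points :: "'v set \<Rightarrow> (('v \<Rightarrow> bool) \<Rightarrow> bool) \<Rightarrow> ('v \<Rightarrow> bool) set" where
  "true_points V f = {x \<in> points V. f x}"

definition chow_w :: "'v set \<Rightarrow> (('v \<Rightarrow> bool) \<Rightarrow> bool) \<Rightarrow> nat" where
  "chow_w V f = card (true_points V f)"

definition chow_wi :: "'v set \<Rightarrow> (('v \<Rightarrow> bool) \<Rightarrow> bool) \<Rightarrow> 'v \<Rightarrow> nat" where
  "chow_wi V f i = card {x \<in> true_points V f. x i}"

definition same_chow :: "'v set \<Rightarrow> (('v \<Rightarrow> bool) \<Rightarrow> bool) \<Rightarrow> (('v \<Rightarrow> bool) \<Rightarrow> bool) \<Rightarrow> bool" where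
  "same_chow V f g \<longleftrightarrow> chow_w V f = chow_w V g \<and> (\<forall>i\<in>V. chow_wi V f i = chow_wi V g i)"

definition same_fun :: "'v set \<Rightarrow> (('v \<Rightarrow> bool) \<Rightarrow> bool) \<Rightarrow> (('v \<Rightarrow> bool) \<Rightarrow> bool) \<Rightarrow> bool" where
  "same_fun V f g \<longleftrightarrow> (\<forall>x\<in>points V. f x = g x)"

definition is_chow :: "'v set \<Rightarrow> (('v \<Rightarrow> bool) \<Rightarrow> bool) \<Rightarrow> bool" where
  "is_chow V f \<longleftrightarrow> (\<forall>g. same_chow V f g \<longrightarrow> same_fun V f g)"

definition restrict_fun :: "'v set \<Rightarrow> ('v \<Rightarrow> bool) \<Rightarrow> (('v \<Rightarrow> bool) \<Rightarrow> bool) \<Rightarrow> (('v \<Rightarrow> bool) \<Rightarrow> bool)" where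
  "restrict_fun S alpha f = (\<lambda>x. f (\<lambda>v. if v \<in> S then alpha v else x v))"

end

theory Submission
  imports Defs
begin

lemma finite_points: "finite V \<Longrightarrow> finite (points V)"
proof -
  assume "finite V"
  have "points V \<subseteq> (\<lambda>A v. v \<in> A) ` Pow V"
  proof
    fix x assume "x \<in> points V"
    hence "x = (\<lambda>v. v \<in> {v\<in>V. x v})" "{v\<in>V. x v} \<in> Pow V"
      by (auto simp: points_def)
    thus "x \<in> (\<lambda>A v. v \<in> A) ` Pow V" by blast
  qed
  thus ?thesis using \<open>finite V\<close> by (meson finite_Pow_iff finite_imageI finite_subset)
qed

lemma split_card:
  assumes "finite V"
  shows "card {x\<in>points V. Q x} = card {x\<in>points V. Q x \<and> A x} + card {x\<in>points V. Q x \<and> \<not> A x}"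
proof -
  have "{x\<in>points V. Q x} = {x\<in>points V. Q x \<and> A x} \<union> {x\<in>points V. Q x \<and> \<not> A x}" by auto
  moreover have "finite (points V)" using finite_points assms by blast
  ultimately show ?thesis by (simp add: card_Un_disjoint disjoint_iff)
qed

lemma bij_card:
  assumes "S \<subseteq> V"
  shows "card {x\<in>points V. (\<forall>v\<in>S. x v = alpha v) \<and> (h (\<lambda>v. if v \<in> S then False else x v) \<and> P x)}
       = card {y\<in>points (V - S). h y \<and> P (\<lambda>v. if v \<in> S then alpha v else y v)}"
proof (rule bij_betw_same_card)
  show "bij_betw (\<lambda>x v. if v \<in> S then False else x v)
     {x\<in>points V. (\<forall>v\<in>S. x v = alpha v) \<and> (h (\<lambda>v. if v \<in> S then False else x v) \<and> P x)}
     {y\<in>points (V - S). h y \<and> P (\<lambda>v. if v \<in> S then alpha v else y v)}"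
  proof (rule bij_betw_byWitness[where f'="\<lambda>y v. if v \<in> S then alpha v else y v"])
    show "\<forall>a\<in>{x \<in> points V. (\<forall>v\<in>S. x v = alpha v) \<and> h (\<lambda>v. if v \<in> S then False else x v) \<and> P x}.
       (\<lambda>v. if v \<in> S then alpha v else (if v \<in> S then False else a v)) = a"
      by (auto intro!: ext)
    show "\<forall>a'\<in>{y \<in> points (V - S). h y \<and> P (\<lambda>v. if v \<in> S then alpha v else y v)}.
       (\<lambda>v. if v \<in> S then False else (if v \<in> S then alpha v else a' v)) = a'"
      by (auto intro!: ext simp: points_def)
    have e: "\<And>a. (\<forall>v\<in>S. a v = alpha v) \<Longrightarrow> (\<lambda>v. if v \<in> S then alpha v else (if v \<in> S then False else a v)) = a"
      by (auto intro!: ext)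
    show "(\<lambda>x v. if v \<in> S then False else x v) `
      {x \<in> points V. (\<forall>v\<in>S. x v = alpha v) \<and> h (\<lambda>v. if v \<in> S then False else x v) \<and> P x}
      \<subseteq> {y \<in> points (V - S). h y \<and> P (\<lambda>v. if v \<in> S then alpha v else y v)}"
    proof (rule image_subsetI)
      fix x assume x: "x \<in> {x \<in> points V. (\<forall>v\<in>S. x v = alpha v) \<and> h (\<lambda>v. if v \<in> S then False else x v) \<and> P x}"
      hence ex: "(\<lambda>v. if v \<in> S then alpha v else (if v \<in> S then False else x v)) = x" using e by blast
      show "(\<lambda>v. if v \<in> S then False else x v) \<in> {y \<in> points (V - S). h y \<and> P (\<lambda>v. if v \<in> S then alpha v else y v)}"
        using x by (simp add: ex) (auto simp: points_def)
    qed
    have e2: "\<And>a. a \<in> points (V-S) \<Longrightarrow> (\<lambda>v. if v \<in> S then False else (if v \<in> S then alpha v else a v)) = a"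
      by (auto intro!: ext simp: points_def)
    show "(\<lambda>y v. if v \<in> S then alpha v else y v) `
      {y \<in> points (V - S). h y \<and> P (\<lambda>v. if v \<in> S then alpha v else y v)}
      \<subseteq> {x \<in> points V. (\<forall>v\<in>S. x v = alpha v) \<and> h (\<lambda>v. if v \<in> S then False else x v) \<and> P x}"
    proof (rule image_subsetI)
      fix y assume y: "y \<in> {y \<in> points (V - S). h y \<and> P (\<lambda>v. if v \<in> S then alpha v else y v)}"
      hence ey: "(\<lambda>v. if v \<in> S then False else (if v \<in> S then alpha v else y v)) = y" using e2 by blast
      show "(\<lambda>v. if v \<in> S then alpha v else y v) \<in> {x \<in> points V. (\<forall>v\<in>S. x v = alpha v) \<and> h (\<lambda>v. if v \<in> S then False else x v) \<and> P x}"
        using y assms by (simp add: ey) (auto simp: points_def)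
    qed
  qed
qed

theorem mainTheorem13:
  fixes V S :: "'v set" and alpha :: "'v \<Rightarrow> bool" and f :: "('v \<Rightarrow> bool) \<Rightarrow> bool"
  assumes "finite V" and "S \<subseteq> V" and "is_chow V f"
  shows "is_chow (V - S) (restrict_fun S alpha f)"
  unfolding is_chow_def
proof (intro allI impI)
  fix g' assume sc: "same_chow (V - S) (restrict_fun S alpha f) g'"
  define A where "A = (\<lambda>x. \<forall>v\<in>S. x v = alpha v)"
  define pr where "pr = (\<lambda>(x::'v\<Rightarrow>bool) v. if v \<in> S then False else x v)"
  define em where "em = (\<lambda>(y::'v\<Rightarrow>bool) v. if v \<in> S then alpha v else y v)"
  define g where "g = (\<lambda>x. if A x then g' (pr x) else f x)"
  let ?f' = "restrict_fun S alpha f"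
  have fA: "A x \<Longrightarrow> f x = ?f' (pr x)" for x
    unfolding restrict_fun_def A_def pr_def
    by (rule arg_cong[where f=f]) (auto intro!: ext)
  have cnt: "card {x\<in>points V. (f x \<and> P x) \<and> A x} = card {y\<in>points (V - S). ?f' y \<and> P (em y)}"
       "card {x\<in>points V. (g x \<and> P x) \<and> A x} = card {y\<in>points (V - S). g' y \<and> P (em y)}" for P
  proof -
    have "{x\<in>points V. (f x \<and> P x) \<and> A x} = {x\<in>points V. A x \<and> (?f' (pr x) \<and> P x)}"
      using fA by auto
    thus "card {x\<in>points V. (f x \<and> P x) \<and> A x} = card {y\<in>points (V - S). ?f' y \<and> P (em y)}"
      using bij_card[OF assms(2), of alpha ?f' P] unfolding A_def pr_def em_def by simp
    have "{x\<in>points V. (g x \<and> P x) \<and> A x} = {x\<in>points V. A x \<and> (g' (pr x) \<and> P x)}"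
      unfolding g_def by auto
    thus "card {x\<in>points V. (g x \<and> P x) \<and> A x} = card {y\<in>points (V - S). g' y \<and> P (em y)}"
      using bij_card[OF assms(2), of alpha g' P] unfolding A_def pr_def em_def by simp
  qed
  have nA: "{x\<in>points V. (f x \<and> P x) \<and> \<not> A x} = {x\<in>points V. (g x \<and> P x) \<and> \<not> A x}" for P
    unfolding g_def by auto
  have gen: "card {x\<in>points V. f x \<and> P x} = card {x\<in>points V. g x \<and> P x}"
    if "card {y\<in>points (V - S). ?f' y \<and> P (em y)} = card {y\<in>points (V - S). g' y \<and> P (em y)}" for P
    using split_card[OF assms(1), of "\<lambda>x. f x \<and> P x" A] split_card[OF assms(1), of "\<lambda>x. g x \<and> P x" A]
      cnt[of P] nA[of P] that by simp
  have w: "chow_w (V - S) ?f' = chow_w (V - S) g'"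
   and wi: "\<And>i. i \<in> V - S \<Longrightarrow> chow_wi (V - S) ?f' i = chow_wi (V - S) g' i"
    using sc unfolding same_chow_def by auto
  have "same_chow V f g"
    unfolding same_chow_def
  proof (intro conjI ballI)
    have "card {x\<in>points V. f x \<and> True} = card {x\<in>points V. g x \<and> True}"
      by (rule gen) (use w in \<open>simp add: chow_w_def true_points_def\<close>)
    thus "chow_w V f = chow_w V g" by (simp add: chow_w_def true_points_def)
  next
    fix i assume i: "i \<in> V"
    have "card {x\<in>points V. f x \<and> x i} = card {x\<in>points V. g x \<and> x i}"
    proof (rule gen)
      show "card {y\<in>points (V - S). ?f' y \<and> em y i} = card {y\<in>points (V - S). g' y \<and> em y i}"
      proof (cases "i \<in> S")
        case True
        then show ?thesis using w by (cases "alpha i") (simp_all add: em_def chow_w_def true_points_def)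
      next
        case False
        then show ?thesis using wi[of i] i by (simp add: em_def chow_wi_def true_points_def)
      qed
    qed
    moreover have "{x \<in> true_points V f. x i} = {x\<in>points V. f x \<and> x i}"
      "{x \<in> true_points V g. x i} = {x\<in>points V. g x \<and> x i}" by (auto simp: true_points_def)
    ultimately show "chow_wi V f i = chow_wi V g i" by (simp add: chow_wi_def)
  qed
  hence sf: "same_fun V f g" using assms(3) unfolding is_chow_def by blast
  show "same_fun (V - S) ?f' g'"
    unfolding same_fun_def
  proof
    fix y assume y: "y \<in> points (V - S)"
    have emV: "em y \<in> points V" "A (em y)" using y assms(2) by (auto simp: points_def em_def A_def)
    have pe: "pr (em y) = y" using y by (auto intro!: ext simp: points_def pr_def em_def)
    have "?f' y = f (em y)" by (simp add: restrict_fun_def em_def)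
    also have "\<dots> = g (em y)" using sf emV by (simp add: same_fun_def)
    also have "\<dots> = g' y" using emV pe by (simp add: g_def)
    finally show "?f' y = g' y" .
  qed
qed

end
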